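(* Let $(A_1,\cdot_1,\circ_1)$ and $(A_2,\cdot_2,\circ_2)$ be two anti-pre-Lie Poisson algebras. Define bilinear operations $\cdot$ and $\circ$ on $A_1\otimes A_2$ by $$(x_1\otimes x_2)\cdot(y_1\otimes y_2)=x_1\cdot_1 y_1\otimes x_2\cdot_2 y_2,$$ $$(x_1\otimes x_2)\circ(y_1\otimes y_2)=x_1\circ_1 y_1\otimes x_2\cdot_2 y_2+x_1\cdot_1 y_1\otimes x_2\circ_2 y_2,$$ for all $x_1,y_1\in A_1$, $x_2,y_2\in A_2$. Then $(A_1\otimes A_2,\cdot,\circ)$ is an anti-pre-Lie Poisson algebra.
   Context: All vector spaces are finite-dimensional over a field $\mathbb F$ of characteristic $0$. An anti-pre-Lie algebra is a vector space $A$ with a bilinear operation $\circ$ such that, writing $[x,y]=x\circ y-y\circ x$, for all $x,y,z\in A$: (i) $x\circ(y\circ z)-y\circ(x\circ z)=[y,x]\circ z$, and (ii) $[x,y]\circ z+[y,z]\circ x+[z,x]\circ y=0$. An anti-pre-Lie Poisson algebra is a triple $(A,\cdot,\circ)$ where $(A,\cdot)$ is a commutative associative algebra, $(A,\circ)$ is an anti-pre-Lie algebra, and for all $x,y,z\in A$: $2(x\circ y)\cdot z-2(y\circ x)\cdot z=y\cdot(x\circ z)-x\cdot(y\circ z)$ and $2x\circ(y\cdot z)=(z\cdot x)\circ y+z\cdot(x\circ y)$. *)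

theory Defs
  imports Complex_Main
begin

definition fin_dim_vs :: "('k::field \<Rightarrow> 'v::ab_group_add \<Rightarrow> 'v) \<Rightarrow> bool" where
  "fin_dim_vs s \<longleftrightarrow> vector_space s \<and> (\<exists>B. finite B \<and> module.span s B = UNIV)"

definition bilinear_op :: "('k::field \<Rightarrow> 'v::ab_group_add \<Rightarrow> 'v) \<Rightarrow> ('v \<Rightarrow> 'v \<Rightarrow> 'v) \<Rightarrow> bool" where
  "bilinear_op s m \<longleftrightarrow>
     (\<forall>x. Vector_Spaces.linear s s (m x)) \<and> (\<forall>y. Vector_Spaces.linear s s (\<lambda>x. m x y))"

definition comm_assoc_alg :: "('k::field \<Rightarrow> 'v::ab_group_add \<Rightarrow> 'v) \<Rightarrow> ('v \<Rightarrow> 'v \<Rightarrow> 'v) \<Rightarrow> bool" where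
  "comm_assoc_alg s m \<longleftrightarrow> bilinear_op s m \<and>
     (\<forall>x y. m x y = m y x) \<and> (\<forall>x y z. m (m x y) z = m x (m y z))"

definition anti_pre_Lie :: "('k::field \<Rightarrow> 'v::ab_group_add \<Rightarrow> 'v) \<Rightarrow> ('v \<Rightarrow> 'v \<Rightarrow> 'v) \<Rightarrow> bool" where
  "anti_pre_Lie s c \<longleftrightarrow> bilinear_op s c \<and>
     (\<forall>x y z. c x (c y z) - c y (c x z) = c (c y x - c x y) z) \<and>
     (\<forall>x y z. c (c x y - c y x) z + c (c y z - c z y) x + c (c z x - c x z) y = 0)"

definition anti_pre_Lie_Poisson ::
  "('k::field \<Rightarrow> 'v::ab_group_add \<Rightarrow> 'v) \<Rightarrow> ('v \<Rightarrow> 'v \<Rightarrow> 'v) \<Rightarrow> ('v \<Rightarrow> 'v \<Rightarrow> 'v) \<Rightarrow> bool" where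
  "anti_pre_Lie_Poisson s d c \<longleftrightarrow> fin_dim_vs s \<and> comm_assoc_alg s d \<and> anti_pre_Lie s c \<and>
     (\<forall>x y z. s 2 (d (c x y) z) - s 2 (d (c y x) z) = d y (c x z) - d x (c y z)) \<and>
     (\<forall>x y z. s 2 (c x (d y z)) = c (d z x) y + d z (c x y))"

text \<open>(T, s, tens) is a tensor product of the vector spaces (s1) and (s2):
  tens is bilinear, the pure tensors span T, and tens maps products of linearly
  independent sets injectively onto linearly independent sets (for finite-dimensional
  spaces this is the standard characterisation: tensors of basis vectors form a basis).\<close>

definition is_tensor_product ::
  "('k::field \<Rightarrow> 'a::ab_group_add \<Rightarrow> 'a) \<Rightarrow> ('k \<Rightarrow> 'b::ab_group_add \<Rightarrow> 'b) \<Rightarrow>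
   ('k \<Rightarrow> 't::ab_group_add \<Rightarrow> 't) \<Rightarrow> ('a \<Rightarrow> 'b \<Rightarrow> 't) \<Rightarrow> bool" where
  "is_tensor_product s1 s2 s tens \<longleftrightarrow>
     vector_space s1 \<and> vector_space s2 \<and> vector_space s \<and>
     (\<forall>x. Vector_Spaces.linear s2 s (tens x)) \<and>
     (\<forall>y. Vector_Spaces.linear s1 s (\<lambda>x. tens x y)) \<and>
     module.span s (range (case_prod tens)) = UNIV \<and>
     (\<forall>B1 B2. \<not> module.dependent s1 B1 \<and> \<not> module.dependent s2 B2 \<longrightarrow>
        inj_on (case_prod tens) (B1 \<times> B2) \<and> \<not> module.dependent s (case_prod tens ` (B1 \<times> B2)))"

end

theory Submission
  imports Defs
begin

lemma bil:
  assumes "bilinear_op s m"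
  shows "m (a + b) y = m a y + m b y" "m x (a + b) = m x a + m x b"
    "m (a - b) y = m a y - m b y" "m x (a - b) = m x a - m x b"
    "m (- a) y = - m a y" "m x (- a) = - m x a"
    "m (s k a) y = s k (m a y)" "m x (s k a) = s k (m x a)"
    "m 0 y = 0" "m x 0 = 0"
proof -
  have h1: "module_hom s s (m x)" for x using assms by (simp add: bilinear_op_def module_hom_iff_linear)
  have h2: "module_hom s s (\<lambda>x. m x y)" for y using assms by (simp add: bilinear_op_def module_hom_iff_linear)
  show "m (a + b) y = m a y + m b y" using module_hom.add[OF h2] by simp
  show "m x (a + b) = m x a + m x b" using module_hom.add[OF h1] by simp
  show "m (a - b) y = m a y - m b y" using module_hom.diff[OF h2] by simp
  show "m x (a - b) = m x a - m x b" using module_hom.diff[OF h1] by simp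
  show "m (- a) y = - m a y" using module_hom.neg[OF h2] by simp
  show "m x (- a) = - m x a" using module_hom.neg[OF h1] by simp
  show "m (s k a) y = s k (m a y)" using module_hom.scale[OF h2] by simp
  show "m x (s k a) = s k (m x a)" using module_hom.scale[OF h1] by simp
  show "m 0 y = 0" using module_hom.zero[OF h2] by simp
  show "m x 0 = 0" using module_hom.zero[OF h1] by simp
qed

lemma two_scale:
  assumes "vector_space s"
  shows "s 2 v = v + v"
proof -
  have "s (1 + 1) v = s 1 v + s 1 v" using vector_space.vector_space_assms(2)[OF assms] by blast
  then show ?thesis using vector_space.vector_space_assms(4)[OF assms] by simp
qed

lemma half_cancel:
  fixes s :: "'k::field_char_0 \<Rightarrow> 'v::ab_group_add \<Rightarrow> 'v" and u w :: 'v
  assumes "vector_space s" "u + u = w + w"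
  shows "u = w"
proof -
  have "s 2 u = s 2 w" using assms by (simp add: two_scale)
  then have "s (1/2) (s 2 u) = s (1/2) (s 2 w)" by simp
  then show ?thesis using vector_space.vector_space_assms(3,4)[OF assms(1)] by simp
qed

locale aplp =
  fixes s :: "'k::field_char_0 \<Rightarrow> 'a::ab_group_add \<Rightarrow> 'a"
    and pr ci :: "'a \<Rightarrow> 'a \<Rightarrow> 'a"
  assumes aplp: "anti_pre_Lie_Poisson s pr ci"
begin

lemma vs: "vector_space s"
  using aplp by (simp add: anti_pre_Lie_Poisson_def fin_dim_vs_def)

lemma bpr: "bilinear_op s pr"
  using aplp by (simp add: anti_pre_Lie_Poisson_def comm_assoc_alg_def)

lemma bci: "bilinear_op s ci"
  using aplp unfolding anti_pre_Lie_Poisson_def anti_pre_Lie_def by blast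

lemmas prb = bil[OF bpr]
lemmas cib = bil[OF bci]

lemma comm: "pr x y = pr y x"
  using aplp unfolding anti_pre_Lie_Poisson_def comm_assoc_alg_def by blast

lemma assoc: "pr (pr x y) z = pr x (pr y z)"
  using aplp unfolding anti_pre_Lie_Poisson_def comm_assoc_alg_def by blast

lemma apl1: "ci x (ci y z) - ci y (ci x z) = ci (ci y x - ci x y) z"
  using aplp unfolding anti_pre_Lie_Poisson_def anti_pre_Lie_def by blast

lemma apl2: "ci (ci x y - ci y x) z + ci (ci y z - ci z y) x + ci (ci z x - ci x z) y = 0"
  using aplp unfolding anti_pre_Lie_Poisson_def anti_pre_Lie_def by blast

lemma P1s: "pr (ci x y) z + pr (ci x y) z - (pr (ci y x) z + pr (ci y x) z) = pr y (ci x z) - pr x (ci y z)"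
  using aplp unfolding anti_pre_Lie_Poisson_def two_scale[OF vs] by blast

lemma P2s: "ci x (pr y z) + ci x (pr y z) = ci (pr z x) y + pr z (ci x y)"
  using aplp unfolding anti_pre_Lie_Poisson_def two_scale[OF vs] by blast

lemma Meq: "pr a (ci b c) = ci b (pr c a) + ci b (pr c a) - ci (pr a b) c"
  using P2s[of b c a] by (simp add: algebra_simps)

lemma Kl: "ci x (pr y z) + ci (pr y z) x = ci y (pr x z) + ci (pr x z) y"
proof (rule half_cancel[OF vs])
  have e1: "pr (ci x y) z = ci x (pr y z) + ci x (pr y z) - ci (pr z x) y"
    using Meq[of z x y] comm[of "ci x y" z] by simp
  have e2: "pr (ci y x) z = ci y (pr x z) + ci y (pr x z) - ci (pr z y) x"
    using Meq[of z y x] comm[of "ci y x" z] by simp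
  have e3: "pr y (ci x z) = ci x (pr y z) + ci x (pr y z) - ci (pr y x) z"
    using Meq[of y x z] comm[of z y] by simp
  have e4: "pr x (ci y z) = ci y (pr x z) + ci y (pr x z) - ci (pr x y) z"
    using Meq comm[of z x] by simp
  have H: "pr (ci x y) z + pr (ci x y) z - (pr (ci y x) z + pr (ci y x) z) - (pr y (ci x z) - pr x (ci y z)) = 0"
    using P1s by simp
  have "pr (ci x y) z + pr (ci x y) z - (pr (ci y x) z + pr (ci y x) z) - (pr y (ci x z) - pr x (ci y z))
     = (ci x (pr y z) + ci (pr y z) x + (ci x (pr y z) + ci (pr y z) x)) - (ci y (pr x z) + ci (pr x z) y + (ci y (pr x z) + ci (pr x z) y))"
    unfolding e1 e2 e3 e4 comm[of z x] comm[of z y] comm[of y x] by (simp add: algebra_simps)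
  with H show "ci x (pr y z) + ci (pr y z) x + (ci x (pr y z) + ci (pr y z) x) = ci y (pr x z) + ci (pr x z) y + (ci y (pr x z) + ci (pr x z) y)"
    by simp
qed

lemma K1: "ci (pr y z) x = ci (pr x y) z + ci z (pr x y) - ci x (pr y z)"
proof -
  have "ci x (pr y z) + ci (pr y z) x = ci z (pr x y) + ci (pr x y) z" using Kl[of x z y] comm[of z y] by simp
  then show ?thesis by (simp add: algebra_simps)
qed

lemma K2: "ci (pr x z) y = ci (pr x y) z + ci z (pr x y) - ci y (pr x z)"
proof -
  have "ci y (pr x z) + ci (pr x z) y = ci z (pr x y) + ci (pr x y) z" using Kl[of y z x] comm[of z x] comm[of y x] by simp
  then show ?thesis by (simp add: algebra_simps)
qed

lemma A1y: "ci (ci y x) z = ci x (ci y z) - ci y (ci x z) + ci (ci x y) z"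
  using apl1 by (simp add: cib algebra_simps)

lemma A0: "ci x (ci y z) = ci y (ci x z) - ci y (ci z x) + ci z (ci y x) + ci x (ci z y) - ci z (ci x y)"
proof -
  have H1: "ci x (ci y z) - ci y (ci x z) - ci (ci y x - ci x y) z = 0" using apl1 by simp
  have H2: "ci x (ci z y) - ci z (ci x y) - ci (ci z x - ci x z) y = 0" using apl1[of x z y] by simp
  have H3: "ci y (ci z x) - ci z (ci y x) - ci (ci z y - ci y z) x = 0" using apl1[of y z x] by simp
  have "ci x (ci y z) - (ci y (ci x z) - ci y (ci z x) + ci z (ci y x) + ci x (ci z y) - ci z (ci x y))
    = (ci x (ci y z) - ci y (ci x z) - ci (ci y x - ci x y) z) + (ci y (ci z x) - ci z (ci y x) - ci (ci z y - ci y z) x)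
      - (ci x (ci z y) - ci z (ci x y) - ci (ci z x - ci x z) y)
      - (ci (ci x y - ci y x) z + ci (ci y z - ci z y) x + ci (ci z x - ci x z) y)"
    by (simp add: cib algebra_simps)
  then have "ci x (ci y z) - (ci y (ci x z) - ci y (ci z x) + ci z (ci y x) + ci x (ci z y) - ci z (ci x y)) = 0"
    using H1 H2 H3 apl2 by simp
  then show ?thesis by simp
qed

context
  fixes x y z :: 'a
begin

lemma nf0: "pr (pr x y) z = pr x (pr y z)"
  by (metis comm assoc)
lemma nf1: "pr x (pr z y) = pr x (pr y z)"
  by (metis comm assoc)
lemma nf2: "pr (pr x z) y = pr x (pr y z)"
  by (metis comm assoc)
lemma nf3: "pr y (pr x z) = pr x (pr y z)"
  by (metis comm assoc)
lemma nf4: "pr (pr y x) z = pr x (pr y z)"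
  by (metis comm assoc)
lemma nf5: "pr y (pr z x) = pr x (pr y z)"
  by (metis comm assoc)
lemma nf6: "pr (pr y z) x = pr x (pr y z)"
  by (metis comm assoc)
lemma nf7: "pr z (pr x y) = pr x (pr y z)"
  by (metis comm assoc)
lemma nf8: "pr (pr z x) y = pr x (pr y z)"
  by (metis comm assoc)
lemma nf9: "pr z (pr y x) = pr x (pr y z)"
  by (metis comm assoc)
lemma nf10: "pr (pr z y) x = pr x (pr y z)"
  by (metis comm assoc)
lemma nf11: "ci x (pr z y) = ci x (pr y z)"
  by (metis comm)
lemma nf12: "ci y (pr z x) = ci y (pr x z)"
  by (metis comm)
lemma nf13: "ci z (pr y x) = ci z (pr x y)"
  by (metis comm)
lemma nf14: "ci (pr z y) x = ci (pr x y) z + ci z (pr x y) - ci x (pr y z)"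
  by (subst comm[of z y]) (rule K1)
lemma nf15: "ci (pr y z) x = ci (pr x y) z + ci z (pr x y) - ci x (pr y z)"
  by (rule K1)
lemma nf16: "ci (pr z x) y = ci (pr x y) z + ci z (pr x y) - ci y (pr x z)"
  by (subst comm[of z x]) (rule K2)
lemma nf17: "ci (pr x z) y = ci (pr x y) z + ci z (pr x y) - ci y (pr x z)"
  by (rule K2)
lemma nf18: "ci (pr y x) z = ci (pr x y) z"
  by (simp only: comm[of y x])
lemma nf19: "pr x (ci y z) = ci y (pr x z) + ci y (pr x z) - (ci (pr x y) z)"
  by (simp only: Meq nf11 nf12 nf13 nf14 nf15 nf16 nf17 nf18)
lemma nf20: "pr (ci y z) x = ci y (pr x z) + ci y (pr x z) - (ci (pr x y) z)"
  by (simp only: comm[of "ci y z" x] Meq nf11 nf12 nf13 nf14 nf15 nf16 nf17 nf18)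
lemma nf21: "pr x (ci z y) = ci z (pr x y) + ci z (pr x y) - (ci (pr x y) z + ci z (pr x y) - ci y (pr x z))"
  by (simp only: Meq nf11 nf12 nf13 nf14 nf15 nf16 nf17 nf18)
lemma nf22: "pr (ci z y) x = ci z (pr x y) + ci z (pr x y) - (ci (pr x y) z + ci z (pr x y) - ci y (pr x z))"
  by (simp only: comm[of "ci z y" x] Meq nf11 nf12 nf13 nf14 nf15 nf16 nf17 nf18)
lemma nf23: "pr y (ci x z) = ci x (pr y z) + ci x (pr y z) - (ci (pr x y) z)"
  by (simp only: Meq nf11 nf12 nf13 nf14 nf15 nf16 nf17 nf18)
lemma nf24: "pr (ci x z) y = ci x (pr y z) + ci x (pr y z) - (ci (pr x y) z)"
  by (simp only: comm[of "ci x z" y] Meq nf11 nf12 nf13 nf14 nf15 nf16 nf17 nf18)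
lemma nf25: "pr y (ci z x) = ci z (pr x y) + ci z (pr x y) - (ci (pr x y) z + ci z (pr x y) - ci x (pr y z))"
  by (simp only: Meq nf11 nf12 nf13 nf14 nf15 nf16 nf17 nf18)
lemma nf26: "pr (ci z x) y = ci z (pr x y) + ci z (pr x y) - (ci (pr x y) z + ci z (pr x y) - ci x (pr y z))"
  by (simp only: comm[of "ci z x" y] Meq nf11 nf12 nf13 nf14 nf15 nf16 nf17 nf18)
lemma nf27: "pr z (ci x y) = ci x (pr y z) + ci x (pr y z) - (ci (pr x y) z + ci z (pr x y) - ci y (pr x z))"
  by (simp only: Meq nf11 nf12 nf13 nf14 nf15 nf16 nf17 nf18)
lemma nf28: "pr (ci x y) z = ci x (pr y z) + ci x (pr y z) - (ci (pr x y) z + ci z (pr x y) - ci y (pr x z))"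
  by (simp only: comm[of "ci x y" z] Meq nf11 nf12 nf13 nf14 nf15 nf16 nf17 nf18)
lemma nf29: "pr z (ci y x) = ci y (pr x z) + ci y (pr x z) - (ci (pr x y) z + ci z (pr x y) - ci x (pr y z))"
  by (simp only: Meq nf11 nf12 nf13 nf14 nf15 nf16 nf17 nf18)
lemma nf30: "pr (ci y x) z = ci y (pr x z) + ci y (pr x z) - (ci (pr x y) z + ci z (pr x y) - ci x (pr y z))"
  by (simp only: comm[of "ci y x" z] Meq nf11 nf12 nf13 nf14 nf15 nf16 nf17 nf18)
lemma nf31: "ci x (ci y z) = ci y (ci x z) - ci y (ci z x) + ci z (ci y x) + ci x (ci z y) - ci z (ci x y)"
  by (rule A0)
lemma nf32: "ci (ci y x) z = ci y (ci x z) - ci y (ci z x) + ci z (ci y x) + ci x (ci z y) - ci z (ci x y) - ci y (ci x z) + ci (ci x y) z"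
  by (subst A1y) (subst nf31, rule refl)
lemma nf33: "ci (ci z x) y = ci x (ci z y) - ci z (ci x y) + ci (ci x z) y"
  using A1y[of x z y] A1y[of y z x] by simp
lemma nf34: "ci (ci z y) x = ci y (ci z x) - ci z (ci y x) + ci (ci y z) x"
  using A1y[of x z y] A1y[of y z x] by simp
lemmas nf = nf0 nf1 nf2 nf3 nf4 nf5 nf6 nf7 nf8 nf9 nf10 nf11 nf12 nf13 nf14 nf15 nf16 nf17 nf18 nf19 nf20 nf21 nf22 nf23 nf24 nf25 nf26 nf27 nf28 nf29 nf30 nf31 nf32 nf33 nf34

end


end


lemma ext1:
  fixes s :: "'k::field \<Rightarrow> 't::ab_group_add \<Rightarrow> 't" and G :: "'t \<Rightarrow> 't"
    and tens :: "'a \<Rightarrow> 'b \<Rightarrow> 't"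
  assumes vs: "vector_space s" and sp: "module.span s (range (case_prod tens)) = UNIV"
    and ad: "\<And>x x'. G (x + x') = G x + G x'" and sc: "\<And>k x. G (s k x) = s k (G x)"
    and pure: "\<And>a b. G (tens a b) = 0"
  shows "G x = 0"
proof -
  have mod: "module s" using vs by (simp add: module_iff_vector_space)
  have "module_hom s s G" using vs ad sc by (simp add: module_hom_iff_linear Vector_Spaces.linear_iff)
  then have sub: "module.subspace s {x. G x = 0}" by (rule module_hom.subspace_kernel)
  have "module.span s (range (case_prod tens)) \<subseteq> {x. G x = 0}"
    by (rule module.span_minimal[OF mod _ sub]) (auto simp: pure)
  then show ?thesis using sp by auto
qed

lemma ext2:
  fixes s :: "'k::field \<Rightarrow> 't::ab_group_add \<Rightarrow> 't" and F :: "'t \<Rightarrow> 't \<Rightarrow> 't"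
    and tens :: "'a \<Rightarrow> 'b \<Rightarrow> 't"
  assumes vs: "vector_space s" and sp: "module.span s (range (case_prod tens)) = UNIV"
    and a1: "\<And>x x' y. F (x + x') y = F x y + F x' y" and s1: "\<And>k x y. F (s k x) y = s k (F x y)"
    and a2: "\<And>x y y'. F x (y + y') = F x y + F x y'" and s2: "\<And>k x y. F x (s k y) = s k (F x y)"
    and pure: "\<And>a b c d. F (tens a b) (tens c d) = 0"
  shows "F x y = 0"
proof -
  have st1: "F x (tens c d) = 0" for x c d
    by (rule ext1[OF vs sp, where G="\<lambda>x. F x (tens c d)"]) (auto simp: a1 s1 pure)
  show ?thesis
    by (rule ext1[OF vs sp, where G="\<lambda>y. F x y"]) (auto simp: a2 s2 st1)
qed

lemma ext3:
  fixes s :: "'k::field \<Rightarrow> 't::ab_group_add \<Rightarrow> 't" and F :: "'t \<Rightarrow> 't \<Rightarrow> 't \<Rightarrow> 't"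
    and tens :: "'a \<Rightarrow> 'b \<Rightarrow> 't"
  assumes vs: "vector_space s" and sp: "module.span s (range (case_prod tens)) = UNIV"
    and a1: "\<And>x x' y z. F (x + x') y z = F x y z + F x' y z" and s1: "\<And>k x y z. F (s k x) y z = s k (F x y z)"
    and a2: "\<And>x y y' z. F x (y + y') z = F x y z + F x y' z" and s2: "\<And>k x y z. F x (s k y) z = s k (F x y z)"
    and a3: "\<And>x y z z'. F x y (z + z') = F x y z + F x y z'" and s3: "\<And>k x y z. F x y (s k z) = s k (F x y z)"
    and pure: "\<And>a b c d e f. F (tens a b) (tens c d) (tens e f) = 0"
  shows "F x y z = 0"
proof -
  have st1: "F x (tens c d) (tens e f) = 0" for x c d e f
    by (rule ext1[OF vs sp, where G="\<lambda>x. F x (tens c d) (tens e f)"]) (auto simp: a1 s1 pure)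
  have st2: "F x y (tens e f) = 0" for x y e f
    by (rule ext1[OF vs sp, where G="\<lambda>y. F x y (tens e f)"]) (auto simp: a2 s2 st1)
  show ?thesis
    by (rule ext1[OF vs sp, where G="\<lambda>z. F x y z"]) (auto simp: a3 s3 st2)
qed

theorem theorem3p47:
  fixes s1 :: "'k::field_char_0 \<Rightarrow> 'a::ab_group_add \<Rightarrow> 'a"
    and d1 c1 :: "'a \<Rightarrow> 'a \<Rightarrow> 'a"
    and s2 :: "'k \<Rightarrow> 'b::ab_group_add \<Rightarrow> 'b"
    and d2 c2 :: "'b \<Rightarrow> 'b \<Rightarrow> 'b"
    and s :: "'k \<Rightarrow> 't::ab_group_add \<Rightarrow> 't"
    and tens :: "'a \<Rightarrow> 'b \<Rightarrow> 't"
    and d c :: "'t \<Rightarrow> 't \<Rightarrow> 't"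
  assumes A1: "anti_pre_Lie_Poisson s1 d1 c1"
    and A2: "anti_pre_Lie_Poisson s2 d2 c2"
    and T: "is_tensor_product s1 s2 s tens"
    and bd: "bilinear_op s d"
    and bc: "bilinear_op s c"
    and d_def: "\<And>x1 x2 y1 y2. d (tens x1 x2) (tens y1 y2) = tens (d1 x1 y1) (d2 x2 y2)"
    and c_def: "\<And>x1 x2 y1 y2. c (tens x1 x2) (tens y1 y2) =
                  tens (c1 x1 y1) (d2 x2 y2) + tens (d1 x1 y1) (c2 x2 y2)"
  shows "anti_pre_Lie_Poisson s d c"

proof -
  interpret A1: aplp s1 d1 c1 using A1 by (simp add: aplp_def)
  interpret A2: aplp s2 d2 c2 using A2 by (simp add: aplp_def)
  have vs: "vector_space s" using T by (simp add: is_tensor_product_def)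
  interpret V: vector_space s by (rule vs)
  have sp: "module.span s (range (case_prod tens)) = UNIV" using T by (simp add: is_tensor_product_def)
  have h1: "module_hom s2 s (tens x)" for x
    using T by (simp add: is_tensor_product_def module_hom_iff_linear)
  have h2: "module_hom s1 s (\<lambda>x. tens x y)" for y
    using T by (simp add: is_tensor_product_def module_hom_iff_linear)
  have tb: "tens (a + b) y = tens a y + tens b y" "tens x (a' + b') = tens x a' + tens x b'"
    "tens (a - b) y = tens a y - tens b y" "tens x (a' - b') = tens x a' - tens x b'"
    "tens (- a) y = - tens a y" "tens x (- a') = - tens x a'"
    for a b x y a' b'
    using module_hom.add[OF h2] module_hom.add[OF h1] module_hom.diff[OF h2] module_hom.diff[OF h1]
      module_hom.neg[OF h2] module_hom.neg[OF h1] by simp_all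
  note db = bil[OF bd] and cb = bil[OF bc]
  have two: "s 2 v = v + v" for v by (rule two_scale[OF vs])
  have Fcomm_pure: "d (tens x1 x2) (tens y1 y2) - d (tens y1 y2) (tens x1 x2) = 0" for x1 x2 y1 y2
    by (simp add: d_def A1.comm[of x1 y1] A2.comm[of x2 y2])
  have Fcomm: "d x y - d y x = 0" for x y
    apply (rule ext2[OF vs sp, where F="\<lambda>x y. d x y - d y x"])
    apply (simp_all add: db algebra_simps V.scale_right_diff_distrib V.scale_right_distrib)[4]
    apply (rule Fcomm_pure)
    done
  have Fassoc_pure: "d (d (tens x1 x2) (tens y1 y2)) (tens z1 z2) - d (tens x1 x2) (d (tens y1 y2) (tens z1 z2)) = 0" for x1 x2 y1 y2 z1 z2
    apply (simp only: c_def d_def db cb tb)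
    apply (simp only: A1.nf[where x=x1 and y=y1 and z=z1] A2.nf[where x=x2 and y=y2 and z=z2] tb)
    apply (simp only: diff_conv_add_uminus minus_add_distrib minus_minus)
    apply simp
    done
  have Fassoc: "d (d x y) z - d x (d y z) = 0" for x y z
    apply (rule ext3[OF vs sp, where F="\<lambda>x y z. d (d x y) z - d x (d y z)"])
    apply (simp_all add: db cb algebra_simps V.scale_right_diff_distrib V.scale_right_distrib)[6]
    apply (rule Fassoc_pure)
    done
  have Fapl1_pure: "c (tens x1 x2) (c (tens y1 y2) (tens z1 z2)) - c (tens y1 y2) (c (tens x1 x2) (tens z1 z2)) - c (c (tens y1 y2) (tens x1 x2) - c (tens x1 x2) (tens y1 y2)) (tens z1 z2) = 0" for x1 x2 y1 y2 z1 z2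
    apply (simp only: c_def d_def db cb tb)
    apply (simp only: A1.nf[where x=x1 and y=y1 and z=z1] A2.nf[where x=x2 and y=y2 and z=z2] tb)
    apply (simp only: diff_conv_add_uminus minus_add_distrib minus_minus)
    apply simp
    done
  have Fapl1: "c x (c y z) - c y (c x z) - c (c y x - c x y) z = 0" for x y z
    apply (rule ext3[OF vs sp, where F="\<lambda>x y z. c x (c y z) - c y (c x z) - c (c y x - c x y) z"])
    apply (simp_all add: db cb algebra_simps V.scale_right_diff_distrib V.scale_right_distrib)[6]
    apply (rule Fapl1_pure)
    done
  have Fapl2_pure: "c (c (tens x1 x2) (tens y1 y2) - c (tens y1 y2) (tens x1 x2)) (tens z1 z2) + c (c (tens y1 y2) (tens z1 z2) - c (tens z1 z2) (tens y1 y2)) (tens x1 x2) + c (c (tens z1 z2) (tens x1 x2) - c (tens x1 x2) (tens z1 z2)) (tens y1 y2) = 0" for x1 x2 y1 y2 z1 z2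
    apply (simp only: c_def d_def db cb tb)
    apply (simp only: A1.nf[where x=x1 and y=y1 and z=z1] A2.nf[where x=x2 and y=y2 and z=z2] tb)
    apply (simp only: diff_conv_add_uminus minus_add_distrib minus_minus)
    apply simp
    done
  have Fapl2: "c (c x y - c y x) z + c (c y z - c z y) x + c (c z x - c x z) y = 0" for x y z
    apply (rule ext3[OF vs sp, where F="\<lambda>x y z. c (c x y - c y x) z + c (c y z - c z y) x + c (c z x - c x z) y"])
    apply (simp_all add: db cb algebra_simps V.scale_right_diff_distrib V.scale_right_distrib)[6]
    apply (rule Fapl2_pure)
    done
  have FP1_pure: "d (c (tens x1 x2) (tens y1 y2)) (tens z1 z2) + d (c (tens x1 x2) (tens y1 y2)) (tens z1 z2) - (d (c (tens y1 y2) (tens x1 x2)) (tens z1 z2) + d (c (tens y1 y2) (tens x1 x2)) (tens z1 z2)) - (d (tens y1 y2) (c (tens x1 x2) (tens z1 z2)) - d (tens x1 x2) (c (tens y1 y2) (tens z1 z2))) = 0" for x1 x2 y1 y2 z1 z2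
    apply (simp only: c_def d_def db cb tb)
    apply (simp only: A1.nf[where x=x1 and y=y1 and z=z1] A2.nf[where x=x2 and y=y2 and z=z2] tb)
    apply (simp only: diff_conv_add_uminus minus_add_distrib minus_minus)
    apply simp
    done
  have FP1: "d (c x y) z + d (c x y) z - (d (c y x) z + d (c y x) z) - (d y (c x z) - d x (c y z)) = 0" for x y z
    apply (rule ext3[OF vs sp, where F="\<lambda>x y z. d (c x y) z + d (c x y) z - (d (c y x) z + d (c y x) z) - (d y (c x z) - d x (c y z))"])
    apply (simp_all add: db cb algebra_simps V.scale_right_diff_distrib V.scale_right_distrib)[6]
    apply (rule FP1_pure)
    done
  have FP2_pure: "c (tens x1 x2) (d (tens y1 y2) (tens z1 z2)) + c (tens x1 x2) (d (tens y1 y2) (tens z1 z2)) - (c (d (tens z1 z2) (tens x1 x2)) (tens y1 y2) + d (tens z1 z2) (c (tens x1 x2) (tens y1 y2))) = 0" for x1 x2 y1 y2 z1 z2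
    apply (simp only: c_def d_def db cb tb)
    apply (simp only: A1.nf[where x=x1 and y=y1 and z=z1] A2.nf[where x=x2 and y=y2 and z=z2] tb)
    apply (simp only: diff_conv_add_uminus minus_add_distrib minus_minus)
    apply simp
    done
  have FP2: "c x (d y z) + c x (d y z) - (c (d z x) y + d z (c x y)) = 0" for x y z
    apply (rule ext3[OF vs sp, where F="\<lambda>x y z. c x (d y z) + c x (d y z) - (c (d z x) y + d z (c x y))"])
    apply (simp_all add: db cb algebra_simps V.scale_right_diff_distrib V.scale_right_distrib)[6]
    apply (rule FP2_pure)
    done
  have fin: "fin_dim_vs s"
  proof -
    obtain B1 where B1: "finite B1" "module.span s1 B1 = UNIV"
      using A1 unfolding anti_pre_Lie_Poisson_def fin_dim_vs_def by blast
    obtain B2 where B2: "finite B2" "module.span s2 B2 = UNIV"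
      using A2 unfolding anti_pre_Lie_Poisson_def fin_dim_vs_def by blast
    have mod: "module s" using vs by (simp add: module_iff_vector_space)
    have mod1: "module s1" using A1.vs by (simp add: module_iff_vector_space)
    have mod2: "module s2" using A2.vs by (simp add: module_iff_vector_space)
    define S where "S = module.span s (case_prod tens ` (B1 \<times> B2))"
    have subS: "module.subspace s S" unfolding S_def by (rule module.subspace_span[OF mod])
    have st1: "tens x b \<in> S" if b: "b \<in> B2" for x b
    proof -
      have sub1: "module.subspace s1 ((\<lambda>x. tens x b) -` S)"
        by (rule module_hom.subspace_vimage[OF h2 subS])
      have "B1 \<subseteq> (\<lambda>x. tens x b) -` S"
      proof
        fix a assume "a \<in> B1"
        then have "tens a b \<in> case_prod tens ` (B1 \<times> B2)" using b by force
        then show "a \<in> (\<lambda>x. tens x b) -` S" unfolding S_def vimage_eq by (rule module.span_base[OF mod])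
      qed
      then have "module.span s1 B1 \<subseteq> (\<lambda>x. tens x b) -` S"
        by (rule module.span_minimal[OF mod1 _ sub1])
      then show ?thesis using B1(2) by auto
    qed
    have st2: "tens x y \<in> S" for x y
    proof -
      have sub2: "module.subspace s2 (tens x -` S)"
        by (rule module_hom.subspace_vimage[OF h1 subS])
      have "B2 \<subseteq> tens x -` S" using st1 by auto
      then have "module.span s2 B2 \<subseteq> tens x -` S"
        by (rule module.span_minimal[OF mod2 _ sub2])
      then show ?thesis using B2(2) by auto
    qed
    have "module.span s (range (case_prod tens)) \<subseteq> S"
      by (rule module.span_minimal[OF mod _ subS]) (auto simp: st2)
    then have "S = UNIV" using sp by auto
    moreover have "finite (case_prod tens ` (B1 \<times> B2))" using B1(1) B2(1) by simp
    ultimately show ?thesis unfolding fin_dim_vs_def S_def using vs by blast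
  qed
  have comm: "d x y = d y x" for x y by (subst eq_iff_diff_eq_0) (rule Fcomm)
  have assoc: "d (d x y) z = d x (d y z)" for x y z by (subst eq_iff_diff_eq_0) (rule Fassoc)
  have apl1: "c x (c y z) - c y (c x z) = c (c y x - c x y) z" for x y z
    by (subst eq_iff_diff_eq_0) (rule Fapl1)
  have P1: "s 2 (d (c x y) z) - s 2 (d (c y x) z) = d y (c x z) - d x (c y z)" for x y z
    unfolding two by (subst eq_iff_diff_eq_0) (rule FP1)
  have P2: "s 2 (c x (d y z)) = c (d z x) y + d z (c x y)" for x y z
    unfolding two by (subst eq_iff_diff_eq_0) (rule FP2)
  show ?thesis
    unfolding anti_pre_Lie_Poisson_def comm_assoc_alg_def anti_pre_Lie_def
    using fin bd bc comm assoc apl1 Fapl2 P1 P2 by blast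
qed

end
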